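(* For every $t\ge2$, every sequence $\theta_1,\dots,\theta_{t-1}\in\Theta$, and every $\theta\in\Theta$, the effective number of trajectories satisfies $\eta_t(\theta)\ge T_t(\theta)$. Moreover, if $v(\theta)=\sup_{\theta'\in\Theta}d_2(p_\theta\|p_{\theta'})$ is finite, then $\eta_t(\theta)\ge\frac{t-1}{v(\theta)}$.
   Context: Each $\theta\in\Theta$ defines a policy inducing a trajectory distribution $p_\theta$. For probability measures $P\ll Q$, $d_2(P\|Q)=\int(\frac{dP}{dQ})^2dQ$ ($+\infty$ if $P\not\ll Q$). Given previously executed parameters $\theta_1,\dots,\theta_{t-1}$, $\Phi_t=\frac1{t-1}\sum_{i=1}^{t-1}p_{\theta_i}$, $\eta_t(\theta)=\frac{t-1}{d_2(p_\theta\|\Phi_t)}$ (equal to $0$ if the divergence is infinite), and $T_t(\theta)=\sum_{i=1}^{t-1}\mathbb 1\{\theta_i=\theta\}$. *)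

theory Defs
  imports "HOL-Probability.Probability"
begin

text \<open>Note: in the library, absolutely_continuous Q P means P << Q.\<close>
definition d2 :: "'a measure \<Rightarrow> 'a measure \<Rightarrow> ennreal" where
  "d2 P Q = (if sets P = sets Q \<and> absolutely_continuous Q P
             then (\<integral>\<^sup>+ x. (RN_deriv Q P x)^2 \<partial>Q) else \<infinity>)"

definition mixture :: "'a measure \<Rightarrow> ('p \<Rightarrow> 'a measure) \<Rightarrow> (nat \<Rightarrow> 'p) \<Rightarrow> nat \<Rightarrow> 'a measure" where
  "mixture M p th t = measure_of (space M) (sets M)
     (\<lambda>A. (1 / of_nat (t - 1)) * (\<Sum>i\<in>{1..t-1}. emeasure (p (th i)) A))"

definition eta :: "'a measure \<Rightarrow> ('p \<Rightarrow> 'a measure) \<Rightarrow> (nat \<Rightarrow> 'p) \<Rightarrow> nat \<Rightarrow> 'p \<Rightarrow> ennreal" where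
  "eta M p th t \<theta> = (let D = d2 (p \<theta>) (mixture M p th t) in
      if D = \<infinity> then 0 else of_nat (t - 1) / D)"

definition T_count :: "(nat \<Rightarrow> 'p) \<Rightarrow> nat \<Rightarrow> 'p \<Rightarrow> nat" where
  "T_count th t \<theta> = card {i \<in> {1..t-1}. th i = \<theta>}"

end

theory Submission
  imports Defs
begin


lemma inv_anti_ennreal: assumes "D \<le> (B::ennreal)" shows "inverse B \<le> inverse D"
proof (cases "B = top \<or> D = 0")
  case True then show ?thesis by auto
next
  case False
  then have "D < top" using assms by (metis le_less_trans less_top)
  then obtain d b where db: "D = ennreal d" "B = ennreal b" "0 \<le> d" "0 \<le> b" using False
    by (cases D; cases B) auto
  have "0 < d" using False db by auto
  moreover have "d \<le> b" using assms db by (simp add: ennreal_le_iff)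
  ultimately show ?thesis using db by (simp add: inverse_ennreal ennreal_leI le_imp_inverse_le)
qed

lemma div_anti_ennreal: "D \<le> B \<Longrightarrow> x / B \<le> x / (D::ennreal)"
  unfolding divide_ennreal_def by (intro mult_left_mono inv_anti_ennreal) auto


locale mixloc =
  fixes M :: "'a measure" and N :: "nat \<Rightarrow> 'a measure" and I :: "nat set" and c :: ennreal
  assumes fin: "finite I" and sets_N: "\<And>i. i \<in> I \<Longrightarrow> sets (N i) = sets M"
begin

definition "Phi = measure_of (space M) (sets M) (\<lambda>A. c * (\<Sum>i\<in>I. emeasure (N i) A))"

lemma sets_Phi[simp, measurable_cong]: "sets Phi = sets M"
  unfolding Phi_def by (simp add: sets_measure_of_conv sets.space_closed sets.sigma_sets_eq)

lemma space_Phi[simp]: "space Phi = space M"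
  unfolding Phi_def by simp

lemma emeasure_Phi: assumes "A \<in> sets M" shows "emeasure Phi A = c * (\<Sum>i\<in>I. emeasure (N i) A)"
  unfolding Phi_def
proof (rule emeasure_measure_of_sigma)
  show "sigma_algebra (space M) (sets M)" by (rule sets.sigma_algebra_axioms)
  show "positive (sets M) (\<lambda>A. c * (\<Sum>i\<in>I. emeasure (N i) A))"
    by (simp add: positive_def)
  show "countably_additive (sets M) (\<lambda>A. c * (\<Sum>i\<in>I. emeasure (N i) A))"
  proof (rule countably_additiveI)
    fix A :: "nat \<Rightarrow> 'a set" assume A: "range A \<subseteq> sets M" "disjoint_family A" "\<Union>(range A) \<in> sets M"
    have "(\<Sum>j. c * (\<Sum>i\<in>I. emeasure (N i) (A j))) = c * (\<Sum>j. \<Sum>i\<in>I. emeasure (N i) (A j))"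
      by simp
    also have "(\<Sum>j. \<Sum>i\<in>I. emeasure (N i) (A j)) = (\<Sum>i\<in>I. \<Sum>j. emeasure (N i) (A j))"
      by (rule suminf_sum) auto
    also have "\<dots> = (\<Sum>i\<in>I. emeasure (N i) (\<Union>(range A)))"
    proof (rule sum.cong)
      fix i assume "i \<in> I"
      then have "range A \<subseteq> sets (N i)" using A sets_N by auto
      then show "(\<Sum>j. emeasure (N i) (A j)) = emeasure (N i) (\<Union>(range A))"
        using A by (intro suminf_emeasure) auto
    qed simp
    finally show "(\<Sum>j. c * (\<Sum>i\<in>I. emeasure (N i) (A j))) = c * (\<Sum>i\<in>I. emeasure (N i) (\<Union>(range A)))" .
  qed
qed fact

lemma nn_integral_Phi:
  assumes f: "f \<in> borel_measurable M"
  shows "(\<integral>\<^sup>+x. f x \<partial>Phi) = c * (\<Sum>i\<in>I. \<integral>\<^sup>+x. f x \<partial>N i)"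
  using f
proof (induct rule: borel_measurable_induct)
  case (cong f g)
  have "(\<integral>\<^sup>+x. f x \<partial>Phi) = (\<integral>\<^sup>+x. g x \<partial>Phi)" using cong by (intro nn_integral_cong) auto
  moreover have "\<And>i. i \<in> I \<Longrightarrow> (\<integral>\<^sup>+x. f x \<partial>N i) = (\<integral>\<^sup>+x. g x \<partial>N i)"
    using cong sets_N by (intro nn_integral_cong) (auto dest: sets_eq_imp_space_eq)
  ultimately show ?case using cong by simp
next
  case (set A)
  then show ?case using sets_N by (simp add: emeasure_Phi)
next
  case (mult u k)
  have mi: "\<And>i. i \<in> I \<Longrightarrow> u \<in> borel_measurable (N i)"
    using mult sets_N by (metis measurable_cong_sets)
  have "(\<integral>\<^sup>+x. k * u x \<partial>Phi) = k * (\<integral>\<^sup>+x. u x \<partial>Phi)" using mult by (simp add: nn_integral_cmult)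
  also have "\<dots> = c * (\<Sum>i\<in>I. k * \<integral>\<^sup>+x. u x \<partial>N i)" using mult by (simp add: sum_distrib_left ac_simps)
  also have "\<dots> = c * (\<Sum>i\<in>I. \<integral>\<^sup>+x. k * u x \<partial>N i)" using mi by (simp add: nn_integral_cmult)
  finally show ?case .
next
  case (add u v)
  have mi: "\<And>i. i \<in> I \<Longrightarrow> u \<in> borel_measurable (N i) \<and> v \<in> borel_measurable (N i)"
    using add sets_N by (metis measurable_cong_sets)
  have "(\<integral>\<^sup>+x. v x + u x \<partial>Phi) = (\<integral>\<^sup>+x. v x \<partial>Phi) + (\<integral>\<^sup>+x. u x \<partial>Phi)" using add by (simp add: nn_integral_add)
  also have "\<dots> = c * (\<Sum>i\<in>I. (\<integral>\<^sup>+x. v x \<partial>N i) + (\<integral>\<^sup>+x. u x \<partial>N i))" using add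
    by (simp add: sum.distrib distrib_left)
  also have "\<dots> = c * (\<Sum>i\<in>I. \<integral>\<^sup>+x. v x + u x \<partial>N i)" using mi by (simp add: nn_integral_add)
  finally show ?case .
next
  case (seq U)
  have mi: "\<And>i j. i \<in> I \<Longrightarrow> U j \<in> borel_measurable (N i)"
    using seq sets_N by (metis measurable_cong_sets)
  have "(\<integral>\<^sup>+x. (SUP j. U j) x \<partial>Phi) = (SUP j. \<integral>\<^sup>+x. U j x \<partial>Phi)"
    unfolding SUP_apply using seq by (intro nn_integral_monotone_convergence_SUP) (auto simp: measurable_cong_sets[OF sets_Phi refl])
  also have "\<dots> = (SUP j. c * (\<Sum>i\<in>I. \<integral>\<^sup>+x. U j x \<partial>N i))" using seq by simp
  also have "\<dots> = c * (SUP j. (\<Sum>i\<in>I. \<integral>\<^sup>+x. U j x \<partial>N i))" by (simp add: SUP_mult_left_ennreal)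
  also have "(SUP j. (\<Sum>i\<in>I. \<integral>\<^sup>+x. U j x \<partial>N i)) = (\<Sum>i\<in>I. SUP j. \<integral>\<^sup>+x. U j x \<partial>N i)"
  proof (rule ennreal_SUP_sum)
    fix i show "incseq (\<lambda>j. \<integral>\<^sup>+x. U j x \<partial>N i)"
      unfolding incseq_def
    proof (intro allI impI nn_integral_mono)
      fix j k :: nat and x assume "j \<le> k"
      then show "U j x \<le> U k x" using \<open>incseq U\<close> by (simp add: incseq_def le_fun_def)
    qed
  qed
  also have "\<dots> = (\<Sum>i\<in>I. \<integral>\<^sup>+x. (SUP j. U j) x \<partial>N i)"
    unfolding SUP_apply using seq mi by (intro sum.cong refl nn_integral_monotone_convergence_SUP[symmetric]) auto
  finally show ?case .
qed

end

lemma SUP_min_pow2: "(SUP k::nat. (min a (of_nat k))\<^sup>2) = (a::ennreal)\<^sup>2"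
proof (cases "a = top")
  case True
  have "(SUP k::nat. (of_nat k :: ennreal)) \<le> (SUP k::nat. (of_nat k)\<^sup>2)"
  proof (rule SUP_mono)
    fix k :: nat show "\<exists>m\<in>UNIV. (of_nat k :: ennreal) \<le> (of_nat m)\<^sup>2"
      by (intro bexI[of _ k]) (auto simp: power2_eq_square of_nat_mult[symmetric] simp del: of_nat_mult)
  qed
  then show ?thesis using True by (simp add: ennreal_SUP_of_nat_eq_top top_unique)
next
  case False
  then obtain r where r: "a = ennreal r" "0 \<le> r" by (cases a) auto
  obtain k :: nat where k: "r \<le> real k" using real_arch_simple by blast
  have ak: "min a (of_nat k) = a" using r k by (simp add: min_def ennreal_of_nat_eq_real_of_nat)
  show ?thesis
  proof (rule antisym)
    show "(SUP k::nat. (min a (of_nat k))\<^sup>2) \<le> a\<^sup>2"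
      by (intro SUP_least power_mono) auto
    show "a\<^sup>2 \<le> (SUP k::nat. (min a (of_nat k))\<^sup>2)"
      using ak by (metis SUP_upper UNIV_I)
  qed
qed

lemma real_amgm: "0 < (c::real) \<Longrightarrow> 2 * r \<le> c * r\<^sup>2 + 1 / c"
proof -
  assume c: "0 < c"
  have "0 \<le> (c * r - 1)\<^sup>2" by simp
  hence "2 * c * r \<le> c * (c * r\<^sup>2 + 1 / c)" using c by (simp add: power2_eq_square algebra_simps)
  thus ?thesis using c by (simp add: mult.assoc)
qed

lemma amgm_ennreal: assumes "0 < c" "g < top" shows "2 * g \<le> ennreal c * g\<^sup>2 + ennreal (1/c)"
proof -
  obtain r where r: "g = ennreal r" "0 \<le> r" using assms(2) by (cases g) auto
  have "2 * g = ennreal (2 * r)" using r by (simp add: ennreal_mult)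
  also have "\<dots> \<le> ennreal (c * r\<^sup>2 + 1 / c)" using real_amgm[OF assms(1)] by (rule ennreal_leI)
  also have "\<dots> = ennreal c * g\<^sup>2 + ennreal (1/c)" using r assms(1)
    by (simp add: ennreal_plus[symmetric] ennreal_mult ennreal_power)
  finally show ?thesis .
qed

lemma d2_le_trunc:
  assumes "sets P = sets Q" "absolutely_continuous Q P"
    and B: "\<And>k::nat. (\<integral>\<^sup>+x. (min (RN_deriv Q P x) (of_nat k))\<^sup>2 \<partial>Q) \<le> B"
  shows "d2 P Q \<le> B"
proof -
  have "d2 P Q = (\<integral>\<^sup>+x. (RN_deriv Q P x)\<^sup>2 \<partial>Q)" using assms by (simp add: d2_def)
  also have "\<dots> = (\<integral>\<^sup>+x. (SUP k::nat. (min (RN_deriv Q P x) (of_nat k))\<^sup>2) \<partial>Q)"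
    by (simp add: SUP_min_pow2)
  also have "\<dots> = (SUP k::nat. \<integral>\<^sup>+x. (min (RN_deriv Q P x) (of_nat k))\<^sup>2 \<partial>Q)"
  proof (rule nn_integral_monotone_convergence_SUP)
    show "incseq (\<lambda>k x. (min (RN_deriv Q P x) (of_nat k))\<^sup>2)"
      by (auto simp: incseq_def le_fun_def intro!: power_mono min.mono)
  qed simp
  also have "\<dots> \<le> B" by (intro SUP_least B)
  finally show ?thesis .
qed

theorem lemma4:
  fixes M :: "'a measure" and p :: "'p \<Rightarrow> 'a measure" and \<Theta> :: "'p set"
    and th :: "nat \<Rightarrow> 'p" and t :: nat and \<theta> :: 'p
  assumes prob: "\<And>\<theta>'. \<theta>' \<in> \<Theta> \<Longrightarrow> prob_space (p \<theta>')"
    and sets_p: "\<And>\<theta>'. \<theta>' \<in> \<Theta> \<Longrightarrow> sets (p \<theta>') = sets M"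
    and t2: "t \<ge> 2"
    and th_in: "\<And>i. i \<in> {1..t-1} \<Longrightarrow> th i \<in> \<Theta>"
    and \<theta>_in: "\<theta> \<in> \<Theta>"
  shows "eta M p th t \<theta> \<ge> of_nat (T_count th t \<theta>) \<and>
         ((SUP \<theta>'\<in>\<Theta>. d2 (p \<theta>) (p \<theta>')) < \<infinity> \<longrightarrow>
         eta M p th t \<theta> \<ge> of_nat (t - 1) / (SUP \<theta>'\<in>\<Theta>. d2 (p \<theta>) (p \<theta>')))"
proof -
  define n where "n = t - 1"
  have n1: "n \<ge> 1" using t2 by (simp add: n_def)
  define I where "I = {1..n}"
  have thI: "\<And>i. i \<in> I \<Longrightarrow> th i \<in> \<Theta>" using th_in by (simp add: I_def n_def)
  interpret mx: mixloc M "\<lambda>i. p (th i)" I "1 / of_nat n"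
    by unfold_locales (auto simp: I_def thI sets_p)
  have Phi_eq: "mixture M p th t = mx.Phi" unfolding mx.Phi_def mixture_def by (simp add: I_def n_def)
  have cardI: "card I = n" by (simp add: I_def)
  have cn: "(1 / of_nat n :: ennreal) * of_nat n = 1"
  proof -
    have "(1 / of_nat n :: ennreal) * of_nat n = of_nat n * 1 / of_nat n"
      by (simp add: ennreal_times_divide mult.commute)
    also have "\<dots> = 1" using n1 by (simp, intro ennreal_divide_self) (auto simp: of_nat_less_top)
    finally show ?thesis .
  qed
  have c_ne0: "(1 / of_nat n :: ennreal) \<noteq> 0" by simp
  have space_i: "space (p (th i)) = space M" if "i \<in> I" for i
    using sets_p[OF thI[OF that]] by (rule sets_eq_imp_space_eq)
  have sum_const: "(1 / of_nat n) * (\<Sum>i\<in>I. x) = x" for x :: ennreal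
  proof -
    have "(1 / of_nat n) * (\<Sum>i\<in>I. x) = (1 / of_nat n) * (of_nat n * x)" using cardI by simp
    also have "\<dots> = ((1 / of_nat n) * of_nat n) * x" by (rule mult.assoc[symmetric])
    also have "\<dots> = x" using cn by simp
    finally show ?thesis .
  qed
  have Phi_prob: "prob_space mx.Phi"
  proof (rule prob_spaceI)
    have "emeasure mx.Phi (space M) = (1 / of_nat n) * (\<Sum>i\<in>I. emeasure (p (th i)) (space M))"
      by (simp add: mx.emeasure_Phi)
    also have "\<dots> = (1 / of_nat n) * (\<Sum>i\<in>I. 1)"
      using thI prob space_i by (intro arg_cong[where f="(*) _"] sum.cong refl)
        (metis prob_space.emeasure_space_1)
    also have "\<dots> = 1" by (rule sum_const)
    finally show "emeasure mx.Phi (space mx.Phi) = 1" by simp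
  qed
  interpret Phi: prob_space mx.Phi by (rule Phi_prob)
  have null_i: "A \<in> null_sets (p (th i))" if A: "A \<in> null_sets mx.Phi" and i: "i \<in> I" for A i
  proof -
    have AM: "A \<in> sets M" using A by auto
    have "(1 / of_nat n) * (\<Sum>i\<in>I. emeasure (p (th i)) A) = 0"
      using A AM by (simp add: mx.emeasure_Phi null_sets_def)
    then have "(\<Sum>i\<in>I. emeasure (p (th i)) A) = 0" using c_ne0 by simp
    then have "emeasure (p (th i)) A = 0" using i mx.fin by (simp add: sum_eq_0_iff)
    then show ?thesis using AM i thI sets_p by auto
  qed
  define P where "P = p \<theta>"
  have sets_P: "sets P = sets M" using \<theta>_in sets_p by (simp add: P_def)
  have sets_P_Phi: "sets P = sets mx.Phi" using sets_P by simp
  interpret P: prob_space P using prob \<theta>_in by (simp add: P_def)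
  define f where "f = RN_deriv mx.Phi P"
  have f_meas[measurable]: "f \<in> borel_measurable M"
    unfolding f_def using borel_measurable_RN_deriv[of mx.Phi P]
    by (simp add: measurable_cong_sets[OF mx.sets_Phi refl])
  define g where "g = (\<lambda>(k::nat) x. min (f x) (of_nat k))"
  have g_fin: "g k x < top" for k x
    unfolding g_def by (rule le_less_trans[OF min.cobounded2]) (simp add: of_nat_less_top)
  have g_meas[measurable]: "\<And>k. g k \<in> borel_measurable M" unfolding g_def by measurable
  have gP_meas: "\<And>k. g k \<in> borel_measurable P" using sets_P by (simp add: measurable_cong_sets[OF sets_P refl])
  define a where "a = (\<lambda>k. \<integral>\<^sup>+x. (g k x)\<^sup>2 \<partial>mx.Phi)"
  have key: "d2 P mx.Phi \<le> B"
    if AC: "absolutely_continuous mx.Phi P"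
      and H: "\<And>k. 2 * (\<integral>\<^sup>+x. g k x \<partial>P) \<le> a k + B" for B
  proof (rule d2_le_trunc[OF sets_P_Phi AC])
    fix k :: nat
    have dens: "density mx.Phi f = P" unfolding f_def
      using AC sets_P_Phi by (rule Phi.density_RN_deriv)
    have "a k \<le> (\<integral>\<^sup>+x. of_nat k ^ 2 \<partial>mx.Phi)"
      unfolding a_def g_def by (intro nn_integral_mono power_mono) auto
    also have "\<dots> = of_nat k ^ 2" using Phi.emeasure_space_1 by simp
    finally have a_fin: "a k \<noteq> top" by (auto simp: top_unique simp flip: of_nat_power)
    have "a k \<le> (\<integral>\<^sup>+x. f x * g k x \<partial>mx.Phi)"
      unfolding a_def g_def by (intro nn_integral_mono) (auto simp: power2_eq_square intro: mult_right_mono)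
    also have "\<dots> = (\<integral>\<^sup>+x. g k x \<partial>P)"
      by (subst dens[symmetric], rule nn_integral_density[symmetric])
         (auto simp: measurable_cong_sets[OF mx.sets_Phi refl])
    finally have "a k + a k \<le> 2 * (\<integral>\<^sup>+x. g k x \<partial>P)"
      by (metis mult_2 add_mono)
    also have "\<dots> \<le> a k + B" by (rule H)
    finally have "a k \<le> B" using a_fin by (simp add: ennreal_add_left_cancel_le)
    then show "(\<integral>\<^sup>+x. (min (RN_deriv mx.Phi P x) (of_nat k))\<^sup>2 \<partial>mx.Phi) \<le> B"
      by (simp add: a_def g_def f_def)
  qed
  have eta_eq: "eta M p th t \<theta> = (if d2 P mx.Phi = \<infinity> then 0 else of_nat n / d2 P mx.Phi)"
    by (simp add: eta_def Let_def Phi_eq P_def n_def)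
  have part1: "eta M p th t \<theta> \<ge> of_nat (T_count th t \<theta>)"
  proof (cases "T_count th t \<theta> = 0")
    case True then show ?thesis by simp
  next
    case False
    define T where "T = T_count th t \<theta>"
    define S where "S = {i \<in> I. th i = \<theta>}"
    have TS: "T = card S" by (simp add: T_def S_def T_count_def I_def n_def)
    have T0: "T > 0" using False T_def by simp
    have finS: "finite S" "S \<subseteq> I" using mx.fin by (auto simp: S_def)
    then obtain i0 where i0: "i0 \<in> S" using T0 TS by fastforce
    have AC: "absolutely_continuous mx.Phi P"
      unfolding absolutely_continuous_def
      using null_i[of _ i0] i0 by (auto simp: S_def P_def)
    define c where "c = real T / real n"
    have c0: "c > 0" using T0 n1 by (simp add: c_def)
    have B_eq: "ennreal (1 / c) = of_nat n / of_nat T"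
      using T0 n1 by (simp add: c_def ennreal_of_nat_eq_real_of_nat divide_ennreal)
    have "d2 P mx.Phi \<le> of_nat n / of_nat T"
    proof (rule key[OF AC])
      fix k
      have "2 * (\<integral>\<^sup>+x. g k x \<partial>P) = (\<integral>\<^sup>+x. 2 * g k x \<partial>P)"
        by (simp add: nn_integral_cmult gP_meas)
      also have "\<dots> \<le> (\<integral>\<^sup>+x. ennreal c * (g k x)\<^sup>2 + ennreal (1/c) \<partial>P)"
        by (intro nn_integral_mono amgm_ennreal c0) (rule g_fin)
      also have "\<dots> = ennreal c * (\<integral>\<^sup>+x. (g k x)\<^sup>2 \<partial>P) + ennreal (1/c)"
        using gP_meas by (simp add: nn_integral_add nn_integral_cmult P.emeasure_space_1)
      also have "ennreal c * (\<integral>\<^sup>+x. (g k x)\<^sup>2 \<partial>P) \<le> a k"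
      proof -
        have "(1 / of_nat n :: ennreal) * of_nat T = of_nat T * 1 / of_nat n"
          by (simp add: ennreal_times_divide mult.commute)
        also have "\<dots> = ennreal c"
          using T0 n1 by (simp add: c_def ennreal_of_nat_eq_real_of_nat divide_ennreal)
        finally have "ennreal c = (1 / of_nat n) * of_nat T" by simp
        then have "ennreal c * (\<integral>\<^sup>+x. (g k x)\<^sup>2 \<partial>P) = (1 / of_nat n) * (\<Sum>i\<in>S. \<integral>\<^sup>+x. (g k x)\<^sup>2 \<partial>P)"
          by (simp add: TS mult.assoc)
        also have "\<dots> = (1 / of_nat n) * (\<Sum>i\<in>S. \<integral>\<^sup>+x. (g k x)\<^sup>2 \<partial>p (th i))"
          by (simp add: S_def P_def)
        also have "\<dots> \<le> (1 / of_nat n) * (\<Sum>i\<in>I. \<integral>\<^sup>+x. (g k x)\<^sup>2 \<partial>p (th i))"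
          by (intro mult_left_mono sum_mono2 mx.fin finS) auto
        also have "\<dots> = a k" unfolding a_def by (rule mx.nn_integral_Phi[symmetric]) simp
        finally show ?thesis .
      qed
      finally show "2 * (\<integral>\<^sup>+x. g k x \<partial>P) \<le> a k + of_nat n / of_nat T"
        using B_eq by (simp add: add_right_mono)
    qed
    moreover have "(of_nat n / of_nat T :: ennreal) = ennreal (real n / real T)"
      using T0 by (simp add: ennreal_of_nat_eq_real_of_nat divide_ennreal)
    ultimately have D: "d2 P mx.Phi \<le> ennreal (real n / real T)" by simp
    then have "d2 P mx.Phi \<noteq> \<infinity>" by (auto simp: top_unique)
    then have "eta M p th t \<theta> = of_nat n / d2 P mx.Phi" by (simp add: eta_eq)
    also have "\<dots> \<ge> of_nat n / ennreal (real n / real T)" by (rule div_anti_ennreal[OF D])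
    also have "of_nat n / ennreal (real n / real T) = ennreal (real n / (real n / real T))"
      using T0 n1 by (simp add: ennreal_of_nat_eq_real_of_nat divide_ennreal)
    also have "\<dots> = of_nat T" using n1 by (simp add: ennreal_of_nat_eq_real_of_nat)
    finally show ?thesis by (simp add: T_def)
  qed
  have part2: "eta M p th t \<theta> \<ge> of_nat (t - 1) / (SUP \<theta>'\<in>\<Theta>. d2 (p \<theta>) (p \<theta>'))"
    if V: "(SUP \<theta>'\<in>\<Theta>. d2 (p \<theta>) (p \<theta>')) < \<infinity>"
  proof -
    define V where "V = (SUP \<theta>'\<in>\<Theta>. d2 (p \<theta>) (p \<theta>'))"
    have d2i: "d2 P (p (th i)) \<le> V" if "i \<in> I" for i
      unfolding V_def P_def using thI[OF that] by (rule SUP_upper)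
    have Vfin: "V < \<infinity>" using V by (simp add: V_def)
    have ACi: "sets P = sets (p (th i)) \<and> absolutely_continuous (p (th i)) P
             \<and> d2 P (p (th i)) = (\<integral>\<^sup>+x. (RN_deriv (p (th i)) P x)\<^sup>2 \<partial>p (th i))" if i: "i \<in> I" for i
    proof -
      have "d2 P (p (th i)) \<noteq> \<infinity>" using d2i[OF i] Vfin by (auto simp: top_unique)
      then show ?thesis unfolding d2_def by (auto split: if_splits)
    qed
    have oneI: "1 \<in> I" using n1 by (simp add: I_def)
    have AC: "absolutely_continuous mx.Phi P"
      unfolding absolutely_continuous_def
    proof
      fix A assume "A \<in> null_sets mx.Phi"
      then have "A \<in> null_sets (p (th 1))" using null_i oneI by blast
      then show "A \<in> null_sets P" using ACi[OF oneI] by (auto simp: absolutely_continuous_def)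
    qed
    have "d2 P mx.Phi \<le> V"
    proof (rule key[OF AC])
      fix k
      have each: "2 * (\<integral>\<^sup>+x. g k x \<partial>P) \<le> V + (\<integral>\<^sup>+x. (g k x)\<^sup>2 \<partial>p (th i))" if i: "i \<in> I" for i
      proof -
        define Q where "Q = p (th i)"
        interpret Q: prob_space Q using prob thI[OF i] by (simp add: Q_def)
        define h where "h = RN_deriv Q P"
        have sQ: "sets Q = sets M" using sets_p thI[OF i] by (simp add: Q_def)
        have h_meas: "h \<in> borel_measurable Q" unfolding h_def by simp
        have gQ: "g k \<in> borel_measurable Q" by (simp add: measurable_cong_sets[OF sQ refl])
        have dens: "density Q h = P" unfolding h_def
          using ACi[OF i] by (intro Q.density_RN_deriv) (auto simp: Q_def)
        have "2 * (\<integral>\<^sup>+x. g k x \<partial>P) = 2 * (\<integral>\<^sup>+x. h x * g k x \<partial>Q)"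
          by (subst dens[symmetric], subst nn_integral_density) (use h_meas gQ in auto)
        also have "\<dots> = (\<integral>\<^sup>+x. 2 * h x * g k x \<partial>Q)"
          using h_meas gQ by (simp add: nn_integral_cmult[symmetric] mult.assoc)
        also have "\<dots> \<le> (\<integral>\<^sup>+x. (h x)\<^sup>2 + (g k x)\<^sup>2 \<partial>Q)"
          by (intro nn_integral_mono sum_of_squares_ge_ennreal)
        also have "\<dots> = (\<integral>\<^sup>+x. (h x)\<^sup>2 \<partial>Q) + (\<integral>\<^sup>+x. (g k x)\<^sup>2 \<partial>Q)"
          using h_meas gQ by (simp add: nn_integral_add)
        also have "(\<integral>\<^sup>+x. (h x)\<^sup>2 \<partial>Q) = d2 P Q" using ACi[OF i] by (simp add: h_def Q_def)
        also have "d2 P Q \<le> V" using d2i[OF i] by (simp add: Q_def)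
        finally show ?thesis by (simp add: Q_def add_right_mono)
      qed
      have "2 * (\<integral>\<^sup>+x. g k x \<partial>P) = (1 / of_nat n) * (\<Sum>i\<in>I. 2 * (\<integral>\<^sup>+x. g k x \<partial>P))"
        by (rule sum_const[symmetric])
      also have "\<dots> \<le> (1 / of_nat n) * (\<Sum>i\<in>I. V + (\<integral>\<^sup>+x. (g k x)\<^sup>2 \<partial>p (th i)))"
        by (intro mult_left_mono sum_mono each) auto
      also have "\<dots> = V + a k"
        unfolding a_def sum.distrib distrib_left sum_const
        by (subst mx.nn_integral_Phi) simp_all
      finally show "2 * (\<integral>\<^sup>+x. g k x \<partial>P) \<le> a k + V" by (simp add: add.commute)
    qed
    moreover have "d2 P mx.Phi \<noteq> \<infinity>" using calculation Vfin by (auto simp: top_unique)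
    ultimately have "of_nat n / V \<le> eta M p th t \<theta>"
      by (simp add: eta_eq div_anti_ennreal)
    then show ?thesis by (simp add: V_def n_def)
  qed
  show ?thesis using part1 part2 by blast
qed

end
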